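(* Let $Q$ be a symmetric Leibniz algebra, $L$ a dense subalgebra of $Q$, and suppose $Q$ is a multiplicatively semiprime algebra of quotients of $L$. Then for every essential ideal $I$ of $L$, $\mathrm{lan}_{\mathscr{A}(Q)}(\tilde{I})=\{0\}$.
   Context: A symmetric Leibniz algebra satisfies both $[x,[y,z]]=[[x,y],z]-[[x,z],y]$ and $[x,[y,z]]=[[x,y],z]+[y,[x,z]]$. For $x\in Q$, $R_x(u)=[u,x]$, $L_x(u)=[x,u]$. $\mathscr{A}(Q)$ is the associative subalgebra of $\mathrm{End}(Q)$ generated by all $R_x,L_x$; for $X\subseteq Q$, $\mathscr{A}_Q(X)$ is the subalgebra of $\mathscr{A}(Q)$ generated by $R_x,L_x$, $x\in X$. For an ideal $I$ of $L$, $\tilde I$ is the two-sided ideal of $\mathscr{A}_Q(L)$ generated by $\mathscr{A}_Q(I)$, and $\mathrm{lan}_{\mathscr{A}(Q)}(\tilde I)=\{\mu\in\mathscr{A}(Q):\mu\nu=0\ \forall\nu\in\tilde I\}$. $M(Q)$ is the associative algebra generated by the identity and all $R_x,L_x$; $L$ is dense in $Q$ if the only $\mu\in M(Q)$ with $\mu(L)=\{0\}$ is $0$. $Q$ is multiplicatively semiprime if $Q$ is semiprime ($[J,J]\ne0$ for nonzero ideals $J$) and $M(Q)$ is semiprime (no nonzero ideal of zero square). An ideal of $L$ is essential if it meets every nonzero ideal nontrivially. With ${}_L(q)=\mathbb{F}q+\{\sum\xi_i(q):\xi_i\in\mathscr{A}_Q(L)\}$ and $(L:q)=\{x\in L:[x,{}_L(q)]\subseteq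 L,[{}_L(q),x]\subseteq L\}$, $Q$ is an algebra of quotients of $L$ if for all $p,q\in Q$, $p\ne0$, there is $x\in(L:q)$ with $[x,p]\ne0$ or $y\in(L:q)$ with $[p,y]\ne0$. *)

theory Defs
  imports Complex_Main
begin

text \<open>The algebra Q is the whole type 'a, a vector space over the field 'k with
  scalar multiplication sc and bilinear product br.\<close>

definition bilinear_prod :: "('k::field \<Rightarrow> 'a::ab_group_add \<Rightarrow> 'a) \<Rightarrow> ('a \<Rightarrow> 'a \<Rightarrow> 'a) \<Rightarrow> bool" where
  "bilinear_prod sc br \<longleftrightarrow> vector_space sc \<and>
     (\<forall>x. Vector_Spaces.linear sc sc (br x)) \<and> (\<forall>x. Vector_Spaces.linear sc sc (\<lambda>u. br u x))"

definition symmetric_leibniz :: "('k::field \<Rightarrow> 'a::ab_group_add \<Rightarrow> 'a) \<Rightarrow> ('a \<Rightarrow> 'a \<Rightarrow> 'a) \<Rightarrow> bool" where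
  "symmetric_leibniz sc br \<longleftrightarrow> bilinear_prod sc br \<and>
     (\<forall>x y z. br x (br y z) = br (br x y) z - br (br x z) y) \<and>
     (\<forall>x y z. br x (br y z) = br (br x y) z + br y (br x z))"

definition Rop :: "('a \<Rightarrow> 'a \<Rightarrow> 'a) \<Rightarrow> 'a \<Rightarrow> 'a \<Rightarrow> 'a" where
  "Rop br x = (\<lambda>u. br u x)"

definition Lop :: "('a \<Rightarrow> 'a \<Rightarrow> 'a) \<Rightarrow> 'a \<Rightarrow> 'a \<Rightarrow> 'a" where
  "Lop br x = (\<lambda>u. br x u)"

definition lin_subspace :: "('k::field \<Rightarrow> 'a::ab_group_add \<Rightarrow> 'a) \<Rightarrow> 'a set \<Rightarrow> bool" where
  "lin_subspace sc S \<longleftrightarrow> 0 \<in> S \<and> (\<forall>x\<in>S. \<forall>y\<in>S. x + y \<in> S) \<and> (\<forall>c. \<forall>x\<in>S. sc c x \<in> S)"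

inductive_set gen_alg :: "('k::field \<Rightarrow> 'a::ab_group_add \<Rightarrow> 'a) \<Rightarrow> ('a \<Rightarrow> 'a) set \<Rightarrow> ('a \<Rightarrow> 'a) set"
  for sc :: "'k::field \<Rightarrow> 'a::ab_group_add \<Rightarrow> 'a" and S :: "('a \<Rightarrow> 'a) set" where
  gen: "f \<in> S \<Longrightarrow> f \<in> gen_alg sc S"
| zero: "(\<lambda>_. 0) \<in> gen_alg sc S"
| add: "f \<in> gen_alg sc S \<Longrightarrow> g \<in> gen_alg sc S \<Longrightarrow> (\<lambda>u. f u + g u) \<in> gen_alg sc S"
| smul: "f \<in> gen_alg sc S \<Longrightarrow> (\<lambda>u. sc c (f u)) \<in> gen_alg sc S"
| comp: "f \<in> gen_alg sc S \<Longrightarrow> g \<in> gen_alg sc S \<Longrightarrow> f \<circ> g \<in> gen_alg sc S"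

text \<open>\<A>_Q(X): generated by R_x, L_x for x in X; \<A>(Q) = \<A>_Q(UNIV).\<close>
definition AQ :: "('k::field \<Rightarrow> 'a::ab_group_add \<Rightarrow> 'a) \<Rightarrow> ('a \<Rightarrow> 'a \<Rightarrow> 'a) \<Rightarrow> 'a set \<Rightarrow> ('a \<Rightarrow> 'a) set" where
  "AQ sc br X = gen_alg sc ({Rop br x | x. x \<in> X} \<union> {Lop br x | x. x \<in> X})"

definition MQ :: "('k::field \<Rightarrow> 'a::ab_group_add \<Rightarrow> 'a) \<Rightarrow> ('a \<Rightarrow> 'a \<Rightarrow> 'a) \<Rightarrow> ('a \<Rightarrow> 'a) set" where
  "MQ sc br = gen_alg sc (insert id ({Rop br x | x. True} \<union> {Lop br x | x. True}))"

inductive_set gen_ideal :: "('k::field \<Rightarrow> 'a::ab_group_add \<Rightarrow> 'a) \<Rightarrow> ('a \<Rightarrow> 'a) set \<Rightarrow> ('a \<Rightarrow> 'a) set \<Rightarrow> ('a \<Rightarrow> 'a) set"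
  for sc :: "'k::field \<Rightarrow> 'a::ab_group_add \<Rightarrow> 'a" and A :: "('a \<Rightarrow> 'a) set" and S :: "('a \<Rightarrow> 'a) set" where
  gen: "f \<in> S \<Longrightarrow> f \<in> gen_ideal sc A S"
| zero: "(\<lambda>_. 0) \<in> gen_ideal sc A S"
| add: "f \<in> gen_ideal sc A S \<Longrightarrow> g \<in> gen_ideal sc A S \<Longrightarrow> (\<lambda>u. f u + g u) \<in> gen_ideal sc A S"
| smul: "f \<in> gen_ideal sc A S \<Longrightarrow> (\<lambda>u. sc c (f u)) \<in> gen_ideal sc A S"
| lmul: "m \<in> A \<Longrightarrow> f \<in> gen_ideal sc A S \<Longrightarrow> m \<circ> f \<in> gen_ideal sc A S"
| rmul: "m \<in> A \<Longrightarrow> f \<in> gen_ideal sc A S \<Longrightarrow> f \<circ> m \<in> gen_ideal sc A S"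

definition tilde_ideal :: "('k::field \<Rightarrow> 'a::ab_group_add \<Rightarrow> 'a) \<Rightarrow> ('a \<Rightarrow> 'a \<Rightarrow> 'a) \<Rightarrow> 'a set \<Rightarrow> 'a set \<Rightarrow> ('a \<Rightarrow> 'a) set" where
  "tilde_ideal sc br L I = gen_ideal sc (AQ sc br L) (AQ sc br I)"

definition lan :: "('a \<Rightarrow> 'a::zero) set \<Rightarrow> ('a \<Rightarrow> 'a) set \<Rightarrow> ('a \<Rightarrow> 'a) set" where
  "lan A T = {\<mu> \<in> A. \<forall>\<nu>\<in>T. \<mu> \<circ> \<nu> = (\<lambda>_. 0)}"

definition subalg :: "('k::field \<Rightarrow> 'a::ab_group_add \<Rightarrow> 'a) \<Rightarrow> ('a \<Rightarrow> 'a \<Rightarrow> 'a) \<Rightarrow> 'a set \<Rightarrow> bool" where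
  "subalg sc br L \<longleftrightarrow> lin_subspace sc L \<and> (\<forall>x\<in>L. \<forall>y\<in>L. br x y \<in> L)"

definition ideal_of :: "('k::field \<Rightarrow> 'a::ab_group_add \<Rightarrow> 'a) \<Rightarrow> ('a \<Rightarrow> 'a \<Rightarrow> 'a) \<Rightarrow> 'a set \<Rightarrow> 'a set \<Rightarrow> bool" where
  "ideal_of sc br L I \<longleftrightarrow> lin_subspace sc I \<and> I \<subseteq> L \<and>
     (\<forall>x\<in>I. \<forall>y\<in>L. br x y \<in> I \<and> br y x \<in> I)"

definition essential_ideal :: "('k::field \<Rightarrow> 'a::ab_group_add \<Rightarrow> 'a) \<Rightarrow> ('a \<Rightarrow> 'a \<Rightarrow> 'a) \<Rightarrow> 'a set \<Rightarrow> 'a set \<Rightarrow> bool" where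
  "essential_ideal sc br L I \<longleftrightarrow> ideal_of sc br L I \<and>
     (\<forall>J. ideal_of sc br L J \<and> J \<noteq> {0} \<longrightarrow> I \<inter> J \<noteq> {0})"

definition dense_in :: "('k::field \<Rightarrow> 'a::ab_group_add \<Rightarrow> 'a) \<Rightarrow> ('a \<Rightarrow> 'a \<Rightarrow> 'a) \<Rightarrow> 'a set \<Rightarrow> bool" where
  "dense_in sc br L \<longleftrightarrow> (\<forall>\<mu>\<in>MQ sc br. (\<forall>x\<in>L. \<mu> x = 0) \<longrightarrow> \<mu> = (\<lambda>_. 0))"

definition semiprime_alg :: "('k::field \<Rightarrow> 'a::ab_group_add \<Rightarrow> 'a) \<Rightarrow> ('a \<Rightarrow> 'a \<Rightarrow> 'a) \<Rightarrow> bool" where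
  "semiprime_alg sc br \<longleftrightarrow>
     (\<forall>J. ideal_of sc br UNIV J \<and> J \<noteq> {0} \<longrightarrow> (\<exists>a\<in>J. \<exists>b\<in>J. br a b \<noteq> 0))"

definition semiprime_MQ :: "('k::field \<Rightarrow> 'a::ab_group_add \<Rightarrow> 'a) \<Rightarrow> ('a \<Rightarrow> 'a \<Rightarrow> 'a) \<Rightarrow> bool" where
  "semiprime_MQ sc br \<longleftrightarrow>
     (\<forall>J. J \<subseteq> MQ sc br \<and> (\<lambda>_. 0) \<in> J \<and>
          (\<forall>f\<in>J. \<forall>g\<in>J. (\<lambda>u. f u + g u) \<in> J) \<and> (\<forall>c. \<forall>f\<in>J. (\<lambda>u. sc c (f u)) \<in> J) \<and>
          (\<forall>m\<in>MQ sc br. \<forall>f\<in>J. m \<circ> f \<in> J \<and> f \<circ> m \<in> J) \<and>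
          (\<forall>f\<in>J. \<forall>g\<in>J. f \<circ> g = (\<lambda>_. 0))
        \<longrightarrow> J = {\<lambda>_. 0})"

definition mult_semiprime :: "('k::field \<Rightarrow> 'a::ab_group_add \<Rightarrow> 'a) \<Rightarrow> ('a \<Rightarrow> 'a \<Rightarrow> 'a) \<Rightarrow> bool" where
  "mult_semiprime sc br \<longleftrightarrow> semiprime_alg sc br \<and> semiprime_MQ sc br"

definition gen_sub :: "('k::field \<Rightarrow> 'a::ab_group_add \<Rightarrow> 'a) \<Rightarrow> ('a \<Rightarrow> 'a \<Rightarrow> 'a) \<Rightarrow> 'a set \<Rightarrow> 'a \<Rightarrow> 'a set" where
  "gen_sub sc br L q = {sc c q + (\<Sum>\<xi>\<leftarrow>xs. \<xi> q) | c xs. set xs \<subseteq> AQ sc br L}"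

definition colon :: "('k::field \<Rightarrow> 'a::ab_group_add \<Rightarrow> 'a) \<Rightarrow> ('a \<Rightarrow> 'a \<Rightarrow> 'a) \<Rightarrow> 'a set \<Rightarrow> 'a \<Rightarrow> 'a set" where
  "colon sc br L q = {x \<in> L. \<forall>u\<in>gen_sub sc br L q. br x u \<in> L \<and> br u x \<in> L}"

definition algebra_of_quotients :: "('k::field \<Rightarrow> 'a::ab_group_add \<Rightarrow> 'a) \<Rightarrow> ('a \<Rightarrow> 'a \<Rightarrow> 'a) \<Rightarrow> 'a set \<Rightarrow> bool" where
  "algebra_of_quotients sc br L \<longleftrightarrow> subalg sc br L \<and>
     (\<forall>p q. p \<noteq> 0 \<longrightarrow> (\<exists>x\<in>colon sc br L q. br x p \<noteq> 0) \<or> (\<exists>y\<in>colon sc br L q. br p y \<noteq> 0))"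

end

theory Submission
  imports Defs
begin

definition linf :: "('k::field \<Rightarrow> 'a::ab_group_add \<Rightarrow> 'a) \<Rightarrow> ('a \<Rightarrow> 'a) \<Rightarrow> bool" where
  "linf sc f \<longleftrightarrow> (\<forall>a b. f (a + b) = f a + f b) \<and> (\<forall>c a. f (sc c a) = sc c (f a))"

lemma linf_zero: "linf sc f \<Longrightarrow> f 0 = 0"
  unfolding linf_def by (metis add_cancel_right_left add_0)

lemma linf_diff: "linf sc f \<Longrightarrow> f (a - b) = f a - f b"
  unfolding linf_def by (metis diff_add_cancel eq_diff_eq)

lemma linear_linf: "Vector_Spaces.linear sc sc f \<Longrightarrow> linf sc f"
  unfolding linf_def linear_iff_module_hom by (simp add: module_hom.add module_hom.scale)

context
  fixes sc :: "'k::field \<Rightarrow> 'a::ab_group_add \<Rightarrow> 'a" and br :: "'a \<Rightarrow> 'a \<Rightarrow> 'a"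
  assumes SL: "symmetric_leibniz sc br"
begin

lemma VS: "vector_space sc"
  using SL unfolding symmetric_leibniz_def bilinear_prod_def by blast

lemma linL: "linf sc (br x)"
  using SL unfolding symmetric_leibniz_def bilinear_prod_def by (blast intro: linear_linf)

lemma linR: "linf sc (\<lambda>u. br u x)"
  using SL unfolding symmetric_leibniz_def bilinear_prod_def by (blast intro: linear_linf)

lemma id1: "br x (br y z) = br (br x y) z - br (br x z) y"
  using SL unfolding symmetric_leibniz_def by blast

lemma id2: "br x (br y z) = br (br x y) z + br y (br x z)"
  using SL unfolding symmetric_leibniz_def by blast

lemma br_add1: "br (a + b) x = br a x + br b x" using linR[of x] unfolding linf_def by blast
lemma br_add2: "br x (a + b) = br x a + br x b" using linL[of x] unfolding linf_def by blast
lemma br_sc1: "br (sc c a) x = sc c (br a x)" using linR[of x] unfolding linf_def by blast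
lemma br_sc2: "br x (sc c a) = sc c (br x a)" using linL[of x] unfolding linf_def by blast
lemma br_01: "br 0 x = 0" using linf_zero[OF linR[of x]] .
lemma br_02: "br x 0 = 0" using linf_zero[OF linL[of x]] .

lemma sc_zero: "sc c 0 = 0"
  using VS by (simp add: vector_space.linear_id module.scale_zero_right vector_space_def module_def)

lemma MQ_lin: "f \<in> MQ sc br \<Longrightarrow> linf sc f"
  unfolding MQ_def
proof (induction rule: gen_alg.induct)
  case (gen f)
  then show ?case using linL linR unfolding Lop_def Rop_def linf_def by auto
next
  case zero
  then show ?case unfolding linf_def by (simp add: sc_zero)
next
  case (add f g)
  then show ?case unfolding linf_def using VS
    by (simp add: vector_space_def algebra_simps)
next
  case (smul f c)
  then show ?case unfolding linf_def using VS
    by (simp add: vector_space_def mult.commute)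
next
  case (comp f g)
  then show ?case unfolding linf_def by simp
qed


lemma sc_one: "sc 1 z = z"
  using VS unfolding vector_space_def by blast

lemma L_MQ: "Lop br x \<in> MQ sc br"
  unfolding MQ_def by (rule gen_alg.gen) auto
lemma R_MQ: "Rop br x \<in> MQ sc br"
  unfolding MQ_def by (rule gen_alg.gen) auto
lemma comp_MQ: "f \<in> MQ sc br \<Longrightarrow> g \<in> MQ sc br \<Longrightarrow> f \<circ> g \<in> MQ sc br"
  unfolding MQ_def by (rule gen_alg.comp)

lemma AQ_MQ: "f \<in> AQ sc br X \<Longrightarrow> f \<in> MQ sc br"
  unfolding AQ_def MQ_def
proof (induction rule: gen_alg.induct)
  case (gen f)
  then show ?case by (intro gen_alg.gen) auto
next
  case (comp f g)
  then show ?case using gen_alg.comp by blast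
qed (auto intro: gen_alg.intros)

lemma L_AQ: "x \<in> X \<Longrightarrow> Lop br x \<in> AQ sc br X"
  unfolding AQ_def by (rule gen_alg.gen) auto
lemma R_AQ: "x \<in> X \<Longrightarrow> Rop br x \<in> AQ sc br X"
  unfolding AQ_def by (rule gen_alg.gen) auto

end
theorem corollary6p7:
  fixes sc :: "'k::field \<Rightarrow> 'a::ab_group_add \<Rightarrow> 'a"
    and br :: "'a \<Rightarrow> 'a \<Rightarrow> 'a"
    and L I :: "'a set"
  assumes "symmetric_leibniz sc br"
    and "subalg sc br L"
    and "dense_in sc br L"
    and "mult_semiprime sc br"
    and "algebra_of_quotients sc br L"
    and "essential_ideal sc br L I"
  shows "lan (AQ sc br UNIV) (tilde_ideal sc br L I) = {\<lambda>_. 0}"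
proof -
  note SL = assms(1)
  note lin = MQ_lin[OF SL] and comp_MQ = comp_MQ[OF SL] and L_MQ = L_MQ[OF SL] and R_MQ = R_MQ[OF SL]
    and L_AQ = L_AQ[OF SL] and R_AQ = R_AQ[OF SL] and AQ_MQ = AQ_MQ[OF SL] and sc_one = sc_one[OF SL]
    and sc_zero = sc_zero[OF SL] and br_01 = br_01[OF SL] and br_02 = br_02[OF SL]
    and br_add1 = br_add1[OF SL] and br_add2 = br_add2[OF SL] and br_sc1 = br_sc1[OF SL] and br_sc2 = br_sc2[OF SL]
  have dense: "\<And>\<mu>. \<mu> \<in> MQ sc br \<Longrightarrow> (\<And>x. x \<in> L \<Longrightarrow> \<mu> x = 0) \<Longrightarrow> \<mu> = (\<lambda>_. 0)"
    using assms(3) unfolding dense_in_def by blast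
  have Lsub: "lin_subspace sc L" and Lcl: "\<And>x y. x \<in> L \<Longrightarrow> y \<in> L \<Longrightarrow> br x y \<in> L"
    using assms(2) unfolding subalg_def by auto
  have Iid: "ideal_of sc br L I" and Iess: "\<And>J. ideal_of sc br L J \<Longrightarrow> J \<noteq> {0} \<Longrightarrow> I \<inter> J \<noteq> {0}"
    using assms(6) unfolding essential_ideal_def by auto
  have IL: "I \<subseteq> L" using Iid unfolding ideal_of_def by auto
  define Lam where "Lam = {m \<in> MQ sc br. \<forall>\<nu>\<in>tilde_ideal sc br L I. m \<circ> \<nu> = (\<lambda>_. 0)}"
  define W where "W = {w. \<forall>m\<in>Lam. \<forall>u. m (br w u) = 0 \<and> m (br u w) = 0}"
  have LamMQ: "m \<in> MQ sc br" if "m \<in> Lam" for m using that unfolding Lam_def by auto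
  have LamL: "m \<circ> Lop br y \<in> Lam" if "m \<in> Lam" "y \<in> L" for m y
  proof -
    have "m \<circ> Lop br y \<in> MQ sc br" using comp_MQ[OF LamMQ[OF that(1)] L_MQ] .
    moreover have "(m \<circ> Lop br y) \<circ> \<nu> = (\<lambda>_. 0)" if "\<nu> \<in> tilde_ideal sc br L I" for \<nu>
    proof -
      have "Lop br y \<circ> \<nu> \<in> tilde_ideal sc br L I"
        using that L_AQ[OF \<open>y \<in> L\<close>] unfolding tilde_ideal_def by (blast intro: gen_ideal.lmul)
      then show ?thesis using \<open>m \<in> Lam\<close> unfolding Lam_def by (simp add: comp_assoc)
    qed
    ultimately show ?thesis unfolding Lam_def by blast
  qed
  have LamR: "m \<circ> Rop br y \<in> Lam" if "m \<in> Lam" "y \<in> L" for m y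
  proof -
    have "m \<circ> Rop br y \<in> MQ sc br" using comp_MQ[OF LamMQ[OF that(1)] R_MQ] .
    moreover have "(m \<circ> Rop br y) \<circ> \<nu> = (\<lambda>_. 0)" if "\<nu> \<in> tilde_ideal sc br L I" for \<nu>
    proof -
      have "Rop br y \<circ> \<nu> \<in> tilde_ideal sc br L I"
        using that R_AQ[OF \<open>y \<in> L\<close>] unfolding tilde_ideal_def by (blast intro: gen_ideal.lmul)
      then show ?thesis using \<open>m \<in> Lam\<close> unfolding Lam_def by (simp add: comp_assoc)
    qed
    ultimately show ?thesis unfolding Lam_def by blast
  qed
  have IW: "I \<subseteq> W"
  proof
    fix x assume "x \<in> I"
    have TT: "Lop br x \<in> tilde_ideal sc br L I" "Rop br x \<in> tilde_ideal sc br L I"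
      using L_AQ[OF \<open>x \<in> I\<close>] R_AQ[OF \<open>x \<in> I\<close>] unfolding tilde_ideal_def
      by (auto intro: gen_ideal.gen)
    then show "x \<in> W" unfolding W_def Lam_def
    proof (intro CollectI ballI allI conjI)
      fix m u assume a: "m \<in> {m \<in> MQ sc br. \<forall>\<nu>\<in>tilde_ideal sc br L I. m \<circ> \<nu> = (\<lambda>_. 0)}"
      then have "m \<circ> Lop br x = (\<lambda>_. 0)" "m \<circ> Rop br x = (\<lambda>_. 0)"
        using TT by auto
      then show "m (br x u) = 0" "m (br u x) = 0"
        by (auto simp: fun_eq_iff Lop_def Rop_def dest: spec[of _ u])
    qed
  qed
  have Wz1: "m (br w u) = 0" if "m \<in> Lam" "w \<in> W" for m w u using that unfolding W_def by blast
  have Wz2: "m (br u w) = 0" if "m \<in> Lam" "w \<in> W" for m w u using that unfolding W_def by blast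
  have mdiff: "m (a - b) = m a - m b" if "m \<in> Lam" for m a b using linf_diff[OF lin[OF LamMQ[OF that]]] .
  have madd: "m (a + b) = m a + m b" if "m \<in> Lam" for m a b using lin[OF LamMQ[OF that]] unfolding linf_def by blast
  have WL: "br w y \<in> W \<and> br y w \<in> W" if "w \<in> W" "y \<in> L" for w y
  proof -
    have "m (br (br w y) u) = 0 \<and> m (br u (br w y)) = 0 \<and> m (br (br y w) u) = 0 \<and> m (br u (br y w)) = 0"
      if "m \<in> Lam" for m u
    proof -
      have mL: "m \<circ> Lop br y \<in> Lam" and mR: "m \<circ> Rop br y \<in> Lam" using LamL LamR that \<open>y \<in> L\<close> by auto
      have e1: "br (br w y) u = br w (br y u) - br y (br w u)" using id2[OF SL, of w y u] by (simp add: algebra_simps)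
      have e2: "br u (br w y) = br (br u w) y - br (br u y) w" using id1[OF SL, of u w y] .
      have e3: "br (br y w) u = br y (br w u) - br w (br y u)" using id2[OF SL, of y w u] by (simp add: algebra_simps)
      have e4: "br u (br y w) = br (br u y) w - br (br u w) y" using id1[OF SL, of u y w] .
      have a1: "m (br y (br w u)) = 0" using Wz1[OF mL \<open>w \<in> W\<close>] by (simp add: Lop_def)
      have a2: "m (br (br u w) y) = 0" using Wz2[OF mR \<open>w \<in> W\<close>] by (simp add: Rop_def)
      show ?thesis using that a1 a2 Wz1[OF that \<open>w \<in> W\<close>] Wz2[OF that \<open>w \<in> W\<close>]
        by (simp add: e1 e2 e3 e4 mdiff)
    qed
    then show ?thesis unfolding W_def by blast
  qed
  have WQ: "br w q \<in> W \<and> br q w \<in> W" if "w \<in> W" for w q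
  proof -
    have "m (br (br w q) u) = 0 \<and> m (br u (br w q)) = 0 \<and> m (br (br q w) u) = 0 \<and> m (br u (br q w)) = 0"
      if "m \<in> Lam" for m u
    proof -
      have e1: "br (br w q) y = br w (br q y) + br (br w y) q" for y using id1[OF SL, of w q y] by (simp add: algebra_simps)
      have e2: "br y (br w q) = br (br y w) q + br w (br y q)" for y using id2[OF SL, of y w q] .
      have e3: "br (br q w) y = br q (br w y) - br w (br q y)" for y using id2[OF SL, of q w y] by (simp add: algebra_simps)
      have e4: "br y (br q w) = br (br y q) w - br (br y w) q" for y using id1[OF SL, of y q w] .
      have M1: "m \<circ> Lop br (br w q) = (\<lambda>_. 0)"
        by (rule dense[OF comp_MQ[OF LamMQ[OF that] L_MQ]])
           (use WL[OF \<open>w \<in> W\<close>] \<open>m \<in> Lam\<close> \<open>w \<in> W\<close> in \<open>auto simp: Lop_def e1 madd Wz1 Wz2\<close>)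
      have M2: "m \<circ> Rop br (br w q) = (\<lambda>_. 0)"
        by (rule dense[OF comp_MQ[OF LamMQ[OF that] R_MQ]])
           (use WL[OF \<open>w \<in> W\<close>] \<open>m \<in> Lam\<close> \<open>w \<in> W\<close> in \<open>auto simp: Rop_def e2 madd Wz1 Wz2\<close>)
      have M3: "m \<circ> Lop br (br q w) = (\<lambda>_. 0)"
        by (rule dense[OF comp_MQ[OF LamMQ[OF that] L_MQ]])
           (use WL[OF \<open>w \<in> W\<close>] \<open>m \<in> Lam\<close> \<open>w \<in> W\<close> in \<open>auto simp: Lop_def e3 mdiff Wz1 Wz2\<close>)
      have M4: "m \<circ> Rop br (br q w) = (\<lambda>_. 0)"
        by (rule dense[OF comp_MQ[OF LamMQ[OF that] R_MQ]])
           (use WL[OF \<open>w \<in> W\<close>] \<open>m \<in> Lam\<close> \<open>w \<in> W\<close> in \<open>auto simp: Rop_def e4 mdiff Wz1 Wz2\<close>)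
      show ?thesis using M1 M2 M3 M4 by (auto simp: fun_eq_iff Lop_def Rop_def)
    qed
    then show ?thesis unfolding W_def by blast
  qed
  have msc: "m (sc c a) = sc c (m a)" if "m \<in> MQ sc br" for m c a using lin[OF that] unfolding linf_def by blast
  have mz: "m 0 = 0" if "m \<in> MQ sc br" for m using linf_zero[OF lin[OF that]] .
  have madd': "m (a + b) = m a + m b" if "m \<in> MQ sc br" for m a b using lin[OF that] unfolding linf_def by blast
  have mdiff': "m (a - b) = m a - m b" if "m \<in> MQ sc br" for m a b using linf_diff[OF lin[OF that]] .
  have W0: "0 \<in> W" unfolding W_def using LamMQ mz by (auto simp: br_01 br_02)
  have Wadd: "w + v \<in> W" if "w \<in> W" "v \<in> W" for w v
    unfolding W_def using that by (auto simp: br_add1 br_add2 madd Wz1 Wz2)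
  have Wsc: "sc c w \<in> W" if "w \<in> W" for c w
    unfolding W_def using that LamMQ by (auto simp: br_sc1 br_sc2 msc Wz1 Wz2 sc_zero)
  define Ann where "Ann = {z. \<forall>w\<in>W. br z w = 0 \<and> br w z = 0}"
  have A0: "0 \<in> Ann" unfolding Ann_def by (simp add: br_01 br_02)
  have Aadd: "z + v \<in> Ann" if "z \<in> Ann" "v \<in> Ann" for z v
    using that unfolding Ann_def by (simp add: br_add1 br_add2)
  have Asc: "sc c z \<in> Ann" if "z \<in> Ann" for c z
    using that unfolding Ann_def by (simp add: br_sc1 br_sc2 sc_zero)
  have AQ': "br z q \<in> Ann \<and> br q z \<in> Ann" if "z \<in> Ann" for z q
  proof -
    have "br (br z q) w = 0 \<and> br w (br z q) = 0 \<and> br (br q z) w = 0 \<and> br w (br q z) = 0" if "w \<in> W" for w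
    proof -
      have zw: "br z w = 0" "br w z = 0" "br z (br q w) = 0" "br (br w q) z = 0" "br (br q w) z = 0" "br z (br w q) = 0"
        using \<open>z \<in> Ann\<close> \<open>w \<in> W\<close> WQ unfolding Ann_def by auto
      have e1: "br (br z q) w = br z (br q w) + br (br z w) q" using id1[OF SL, of z q w] by (simp add: algebra_simps)
      have e2: "br w (br z q) = br (br w z) q + br z (br w q)" using id2[OF SL, of w z q] .
      have e3: "br (br q z) w = br q (br z w) - br z (br q w)" using id2[OF SL, of q z w] by (simp add: algebra_simps)
      have e4: "br w (br q z) = br (br w q) z - br (br w z) q" using id1[OF SL, of w q z] .
      show ?thesis by (simp add: e1 e2 e3 e4 zw br_01 br_02)
    qed
    then show ?thesis unfolding Ann_def by blast
  qed
  have sp: "\<And>J. ideal_of sc br UNIV J \<Longrightarrow> J \<noteq> {0} \<Longrightarrow> \<exists>a\<in>J. \<exists>b\<in>J. br a b \<noteq> 0"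
    using assms(4) unfolding mult_semiprime_def semiprime_alg_def by blast
  have AW: "Ann \<inter> W = {0}"
  proof (rule ccontr)
    assume "Ann \<inter> W \<noteq> {0}"
    moreover have "ideal_of sc br UNIV (Ann \<inter> W)"
      unfolding ideal_of_def lin_subspace_def using A0 W0 Aadd Wadd Asc Wsc AQ' WQ by auto
    ultimately obtain a b where "a \<in> Ann \<inter> W" "b \<in> Ann \<inter> W" "br a b \<noteq> 0" using sp by blast
    then show False unfolding Ann_def by auto
  qed
  have AL: "Ann \<inter> L = {0}"
  proof (rule ccontr)
    assume "Ann \<inter> L \<noteq> {0}"
    moreover have "ideal_of sc br L (Ann \<inter> L)"
      using Lsub Lcl unfolding ideal_of_def lin_subspace_def using A0 Aadd Asc AQ' by auto
    ultimately have "I \<inter> (Ann \<inter> L) \<noteq> {0}" using Iess by blast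
    moreover have "I \<inter> (Ann \<inter> L) \<subseteq> {0}" using AW IW by blast
    moreover have "0 \<in> I \<inter> (Ann \<inter> L)" using A0 Iid Lsub unfolding ideal_of_def lin_subspace_def by auto
    ultimately show False by blast
  qed
  have Azero: "Ann = {0}"
  proof (rule ccontr)
    assume "Ann \<noteq> {0}"
    then obtain z where z: "z \<in> Ann" "z \<noteq> 0" using A0 by blast
    have zg: "z \<in> gen_sub sc br L z" unfolding gen_sub_def
      by (rule CollectI, rule exI[of _ 1], rule exI[of _ "[]"]) (simp add: sc_one)
    from assms(5) z(2) have "(\<exists>x\<in>colon sc br L z. br x z \<noteq> 0) \<or> (\<exists>y\<in>colon sc br L z. br z y \<noteq> 0)"
      unfolding algebra_of_quotients_def by blast
    then show False
    proof
      assume "\<exists>x\<in>colon sc br L z. br x z \<noteq> 0"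
      then obtain x where "x \<in> colon sc br L z" "br x z \<noteq> 0" by blast
      then have "br x z \<in> L" using zg unfolding colon_def by blast
      moreover have "br x z \<in> Ann" using AQ' z(1) by blast
      ultimately show False using AL \<open>br x z \<noteq> 0\<close> by blast
    next
      assume "\<exists>x\<in>colon sc br L z. br z x \<noteq> 0"
      then obtain x where "x \<in> colon sc br L z" "br z x \<noteq> 0" by blast
      then have "br z x \<in> L" using zg unfolding colon_def by blast
      moreover have "br z x \<in> Ann" using AQ' z(1) by blast
      ultimately show False using AL \<open>br z x \<noteq> 0\<close> by blast
    qed
  qed
  define KG where "KG = {j \<in> MQ sc br. \<forall>w\<in>W. \<forall>u. j (br w u) = 0 \<and> j (br u w) = 0}"
  have KGMQ: "j \<in> MQ sc br" if "j \<in> KG" for j using that unfolding KG_def by blast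
  have KG1: "j (br w u) = 0" "j (br u w) = 0" if "j \<in> KG" "w \<in> W" for j w u
    using that unfolding KG_def by blast+
  have KGcomp: "\<forall>j\<in>KG. j \<circ> m' \<in> KG" if "m' \<in> MQ sc br" for m'
    using that unfolding MQ_def
  proof (induction rule: gen_alg.induct)
    case (gen f)
    show ?case
    proof
      fix j assume j: "j \<in> KG"
      have fM: "f \<in> MQ sc br" unfolding MQ_def using gen by (rule gen_alg.gen)
      have "j (f (br w u)) = 0 \<and> j (f (br u w)) = 0" if "w \<in> W" for w u
      proof -
        from gen consider "f = id" | q where "f = Rop br q" | q where "f = Lop br q" by blast
        then show ?thesis
        proof cases
          case 1 then show ?thesis using KG1[OF j \<open>w \<in> W\<close>] by simp
        next
          case (2 q)
          have e1: "br (br w u) q = br w (br u q) + br (br w q) u" using id1[OF SL, of w u q] by (simp add: algebra_simps)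
          have e2: "br (br u w) q = br u (br w q) - br w (br u q)" using id2[OF SL, of u w q] by (simp add: algebra_simps)
          show ?thesis using 2 KG1[OF j \<open>w \<in> W\<close>] KG1[OF j WQ[OF \<open>w \<in> W\<close>, THEN conjunct1]]
            by (simp add: Rop_def e1 e2 madd' mdiff' KGMQ[OF j])
        next
          case (3 q)
          have e1: "br q (br w u) = br (br q w) u + br w (br q u)" using id2[OF SL, of q w u] .
          have e2: "br q (br u w) = br (br q u) w - br (br q w) u" using id1[OF SL, of q u w] .
          show ?thesis using 3 KG1[OF j \<open>w \<in> W\<close>] KG1[OF j WQ[OF \<open>w \<in> W\<close>, THEN conjunct2]]
            by (simp add: Lop_def e1 e2 madd' mdiff' KGMQ[OF j])
        qed
      qed
      then show "j \<circ> f \<in> KG" unfolding KG_def using comp_MQ[OF KGMQ[OF j] fM] by auto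
    qed
  next
    case zero
    show ?case
    proof
      fix j assume j: "j \<in> KG"
      have "(\<lambda>_. 0) \<in> MQ sc br" unfolding MQ_def by (rule gen_alg.zero)
      then show "j \<circ> (\<lambda>_. 0) \<in> KG" unfolding KG_def using mz[OF KGMQ[OF j]] comp_MQ[OF KGMQ[OF j]] by auto
    qed
  next
    case (add f g)
    show ?case
    proof
      fix j assume j: "j \<in> KG"
      have fg: "(\<lambda>u. f u + g u) \<in> MQ sc br" unfolding MQ_def using add(1,2) by (rule gen_alg.add)
      have "j \<circ> f \<in> KG" "j \<circ> g \<in> KG" using add.IH j by (auto simp: comp_def)
      then show "j \<circ> (\<lambda>u. f u + g u) \<in> KG" unfolding KG_def using comp_MQ[OF KGMQ[OF j] fg]
        by (auto simp: madd'[OF KGMQ[OF j]])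
    qed
  next
    case (smul f c)
    show ?case
    proof
      fix j assume j: "j \<in> KG"
      have fg: "(\<lambda>u. sc c (f u)) \<in> MQ sc br" unfolding MQ_def using smul(1) by (rule gen_alg.smul)
      have "j \<circ> f \<in> KG" using smul.IH j by (auto simp: comp_def)
      then show "j \<circ> (\<lambda>u. sc c (f u)) \<in> KG" unfolding KG_def using comp_MQ[OF KGMQ[OF j] fg]
        by (auto simp: msc[OF KGMQ[OF j]] sc_zero)
    qed
  next
    case (comp f g)
    show ?case
    proof
      fix j assume j: "j \<in> KG"
      have "j \<circ> f \<in> KG" using comp.IH j by (auto simp: comp_def)
      then have "(j \<circ> f) \<circ> g \<in> KG" using comp.IH by (auto simp: comp_def)
      then show "j \<circ> (f \<circ> g) \<in> KG" by (simp add: comp_assoc)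
    qed
  qed
  define A where "A = {a. \<forall>j\<in>KG. j a = 0}"
  have Agen: "br w u \<in> A" "br u w \<in> A" if "w \<in> W" for w u
    unfolding A_def using KG1 that by auto
  have Amap: "m a \<in> A" if "m \<in> MQ sc br" "a \<in> A" for m a
  proof -
    have "j (m a) = 0" if "j \<in> KG" for j
    proof -
      have "j \<circ> m \<in> KG" using KGcomp[OF \<open>m \<in> MQ sc br\<close>] that by blast
      then show ?thesis using \<open>a \<in> A\<close> unfolding A_def by auto
    qed
    then show ?thesis unfolding A_def by blast
  qed
  have AAadd: "a + b \<in> A" if "a \<in> A" "b \<in> A" for a b
  proof -
    have "j (a + b) = 0" if "j \<in> KG" for j
    proof -
      have "j a = 0" "j b = 0" using \<open>a \<in> A\<close> \<open>b \<in> A\<close> that unfolding A_def by blast+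
      then show ?thesis using madd'[OF KGMQ[OF that]] by simp
    qed
    then show ?thesis unfolding A_def by blast
  qed
  have AAsc: "sc c a \<in> A" if "a \<in> A" for c a
  proof -
    have "j (sc c a) = 0" if "j \<in> KG" for j
    proof -
      have "j a = 0" using \<open>a \<in> A\<close> that unfolding A_def by blast
      then show ?thesis using msc[OF KGMQ[OF that]] sc_zero by simp
    qed
    then show ?thesis unfolding A_def by blast
  qed
  define J where "J = {j \<in> KG. \<forall>q. j q \<in> A}"
  have spM: "J = {\<lambda>_. 0}"
  proof -
    have c1: "J \<subseteq> MQ sc br" unfolding J_def using KGMQ by auto
    have z: "(\<lambda>_. 0) \<in> MQ sc br" unfolding MQ_def by (rule gen_alg.zero)
    have c2: "(\<lambda>_. 0) \<in> J"
    proof -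
      have "(0::'a) \<in> A" unfolding A_def using KGMQ mz by blast
      then show ?thesis unfolding J_def KG_def using z by simp
    qed
    have c3: "(\<lambda>u. f u + g u) \<in> J" if "f \<in> J" "g \<in> J" for f g
    proof -
      have M: "(\<lambda>u. f u + g u) \<in> MQ sc br" using that c1 unfolding MQ_def by (auto intro: gen_alg.add)
      have fK: "f \<in> KG" and fA: "\<And>q. f q \<in> A" using that(1) unfolding J_def by auto
      have gK: "g \<in> KG" and gA: "\<And>q. g q \<in> A" using that(2) unfolding J_def by auto
      show ?thesis unfolding J_def KG_def using M KG1[OF fK] KG1[OF gK] AAadd[OF fA gA] by simp
    qed
    have c4: "(\<lambda>u. sc c (f u)) \<in> J" if "f \<in> J" for c f
    proof -
      have M: "(\<lambda>u. sc c (f u)) \<in> MQ sc br" using that c1 unfolding MQ_def by (auto intro: gen_alg.smul)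
      have fK: "f \<in> KG" and fA: "\<And>q. f q \<in> A" using that(1) unfolding J_def by auto
      show ?thesis unfolding J_def KG_def using M KG1[OF fK] AAsc[OF fA] sc_zero by simp
    qed
    have c5: "m \<circ> f \<in> J \<and> f \<circ> m \<in> J" if mM: "m \<in> MQ sc br" and fJ: "f \<in> J" for m f
    proof
      have fM: "f \<in> MQ sc br" using fJ c1 by auto
      have fK: "f \<in> KG" and fA: "\<And>q. f q \<in> A" using fJ unfolding J_def by auto
      have fkill: "f a = 0" if "a \<in> A" for a using that fK unfolding A_def by blast
      have k1: "(m \<circ> f) (br w u) = 0 \<and> (m \<circ> f) (br u w) = 0" if "w \<in> W" for w u
        using KG1[OF fK that] mz[OF \<open>m \<in> MQ sc br\<close>] by simp
      have k2: "(m \<circ> f) q \<in> A" for q using Amap[OF mM fA] by simp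
      show "m \<circ> f \<in> J" unfolding J_def KG_def
        using comp_MQ[OF mM fM] k1 k2 by blast
      have k3: "(f \<circ> m) (br w u) = 0 \<and> (f \<circ> m) (br u w) = 0" if "w \<in> W" for w u
        using fkill[OF Amap[OF mM Agen(1)[OF \<open>w \<in> W\<close>]]] fkill[OF Amap[OF mM Agen(2)[OF \<open>w \<in> W\<close>]]]
        by simp
      have k4: "(f \<circ> m) q \<in> A" for q using fA by simp
      show "f \<circ> m \<in> J" unfolding J_def KG_def
        using comp_MQ[OF fM mM] k3 k4 by blast
    qed
    have c6: "f \<circ> g = (\<lambda>_. 0)" if "f \<in> J" "g \<in> J" for f g
    proof
      fix q
      have fK: "f \<in> KG" using that(1) unfolding J_def by auto
      have gA: "g q \<in> A" using that(2) unfolding J_def by auto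
      show "(f \<circ> g) q = 0" using gA fK unfolding A_def by auto
    qed
    have SPM: "semiprime_MQ sc br" using assms(4) unfolding mult_semiprime_def by blast
    have pre: "J \<subseteq> MQ sc br \<and> (\<lambda>_. 0) \<in> J \<and>
          (\<forall>f\<in>J. \<forall>g\<in>J. (\<lambda>u. f u + g u) \<in> J) \<and> (\<forall>c. \<forall>f\<in>J. (\<lambda>u. sc c (f u)) \<in> J) \<and>
          (\<forall>m\<in>MQ sc br. \<forall>f\<in>J. m \<circ> f \<in> J \<and> f \<circ> m \<in> J) \<and>
          (\<forall>f\<in>J. \<forall>g\<in>J. f \<circ> g = (\<lambda>_. 0))"
      using c1 c2 c3 c4 c5 c6 by (intro conjI ballI allI) auto
    show ?thesis using SPM pre unfolding semiprime_MQ_def by (rule_tac mp[OF spec[of _ J]])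
  qed
  have LamAnn: "m q \<in> Ann" if "m \<in> Lam" for m q
  proof -
    have "Lop br w \<circ> m = (\<lambda>_. 0) \<and> Rop br w \<circ> m = (\<lambda>_. 0)" if "w \<in> W" for w
    proof -
      have mM: "m \<in> MQ sc br" using LamMQ \<open>m \<in> Lam\<close> by auto
      have "Lop br w \<circ> m \<in> J" unfolding J_def KG_def
        using comp_MQ[OF L_MQ mM] Wz1[OF \<open>m \<in> Lam\<close>] Wz2[OF \<open>m \<in> Lam\<close>] Agen[OF that]
        by (auto simp: Lop_def br_02)
      moreover have "Rop br w \<circ> m \<in> J" unfolding J_def KG_def
        using comp_MQ[OF R_MQ mM] Wz1[OF \<open>m \<in> Lam\<close>] Wz2[OF \<open>m \<in> Lam\<close>] Agen[OF that]
        by (auto simp: Rop_def br_01)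
      ultimately show ?thesis using spM by blast
    qed
    then show ?thesis unfolding Ann_def by (auto simp: fun_eq_iff Lop_def Rop_def)
  qed
  show ?thesis
  proof
    show "lan (AQ sc br UNIV) (tilde_ideal sc br L I) \<subseteq> {\<lambda>_. 0}"
    proof
      fix \<mu> assume "\<mu> \<in> lan (AQ sc br UNIV) (tilde_ideal sc br L I)"
      then have "\<mu> \<in> Lam" unfolding lan_def Lam_def using AQ_MQ by auto
      then have "\<mu> = (\<lambda>_. 0)" using LamAnn Azero by (auto simp: fun_eq_iff)
      then show "\<mu> \<in> {\<lambda>_. 0}" by simp
    qed
    show "{\<lambda>_. 0} \<subseteq> lan (AQ sc br UNIV) (tilde_ideal sc br L I)"
      unfolding lan_def AQ_def by (auto intro: gen_alg.zero)
  qed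
qed

end
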